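(* Let $x\ge y\ge 1$. The maximum possible number of orderings of the tasks in an $(x,y)$ task-dependency graph of order $n$ is: $n!$ for $n=x$ (in which case $x=y$); $\frac{(x+1)!}{x-y+2}$ for $n=x+1$; $\frac{(x+2)!}{2(x-y+2)}$ for $n=x+2$ and $y>1$; and $\frac{(x+2)!}{2(x-y+3)}$ for $n=x+2$ and $y=1$. Moreover, the maximum possible number of orderings of the tasks in a $(1,1)$ task-dependency graph of order $n$ is $(n-2)!$ for $n\ge 2$.
   Context: A task-dependency graph is a finite directed acyclic graph (no loops, no multiple edges) whose vertices are called tasks. A vertex is initial if it has in-degree $0$ and terminal if it has out-degree $0$ (an isolated vertex is both). An $(x,y)$ task-dependency graph has exactly $x$ initial and exactly $y$ terminal vertices. The order is the number of vertices. An ordering of the tasks is a linear ordering of all vertices such that for every edge $(u,v)$, $u$ precedes $v$ (a topological ordering). *)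

theory Defs
  imports Complex_Main
begin

(* A task-dependency graph of order n: vertex set {0..<n}, edge relation E
   (a set of ordered pairs, so no multiple edges), acyclic (hence no loops). *)
definition tdg :: "nat \<Rightarrow> (nat \<times> nat) set \<Rightarrow> bool" where
  "tdg n E \<longleftrightarrow> E \<subseteq> {0..<n} \<times> {0..<n} \<and> acyclic E"

definition initial_vertices :: "nat \<Rightarrow> (nat \<times> nat) set \<Rightarrow> nat set" where
  "initial_vertices n E = {v \<in> {0..<n}. \<forall>u. (u, v) \<notin> E}"

definition terminal_vertices :: "nat \<Rightarrow> (nat \<times> nat) set \<Rightarrow> nat set" where
  "terminal_vertices n E = {v \<in> {0..<n}. \<forall>w. (v, w) \<notin> E}"

definition xy_tdg :: "nat \<Rightarrow> nat \<Rightarrow> nat \<Rightarrow> (nat \<times> nat) set \<Rightarrow> bool" where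
  "xy_tdg x y n E \<longleftrightarrow> tdg n E \<and> card (initial_vertices n E) = x \<and> card (terminal_vertices n E) = y"

definition orderings :: "nat \<Rightarrow> (nat \<times> nat) set \<Rightarrow> nat list set" where
  "orderings n E = {xs. distinct xs \<and> set xs = {0..<n} \<and>
     (\<forall>(u, v) \<in> E. \<forall>i j. i < length xs \<longrightarrow> j < length xs \<longrightarrow> xs ! i = u \<longrightarrow> xs ! j = v \<longrightarrow> i < j)}"

definition num_orderings :: "nat \<Rightarrow> (nat \<times> nat) set \<Rightarrow> nat" where
  "num_orderings n E = card (orderings n E)"

definition max_orderings_is :: "nat \<Rightarrow> nat \<Rightarrow> nat \<Rightarrow> real \<Rightarrow> bool" where
  "max_orderings_is x y n m \<longleftrightarrow>
     (\<exists>E. xy_tdg x y n E \<and> real (num_orderings n E) = m) \<and>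
     (\<forall>E. xy_tdg x y n E \<longrightarrow> real (num_orderings n E) \<le> m)"

end

theory Submission
  imports Defs "HOL-Combinatorics.Multiset_Permutations"
begin


fun idx :: "'a list \<Rightarrow> 'a \<Rightarrow> nat" where
  "idx [] a = 0" | "idx (x#xs) a = (if x = a then 0 else Suc (idx xs a))"

lemma index_less_size_conv: "(idx xs a < length xs) = (a \<in> set xs)"
  by (induction xs) auto

lemma nth_index: "a \<in> set xs \<Longrightarrow> xs ! idx xs a = a"
  by (induction xs) auto

lemma index_nth_id: "distinct xs \<Longrightarrow> i < length xs \<Longrightarrow> idx xs (xs ! i) = i"
proof (induction xs arbitrary: i)
  case Nil then show ?case by simp
next
  case (Cons x xs) then show ?case by (cases i) auto
qed

lemma index_append: "idx (xs @ ys) a = (if a \<in> set xs then idx xs a else length xs + idx ys a)"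
  by (induction xs) auto

definition ext :: "nat set \<Rightarrow> (nat \<times> nat) set \<Rightarrow> nat list set" where
  "ext V R = {xs. distinct xs \<and> set xs = V \<and>
     (\<forall>u\<in>V. \<forall>v\<in>V. (u,v) \<in> R \<longrightarrow> idx xs u < idx xs v)}"

lemma orderings_ext: "orderings n E = ext {0..<n} E"
proof -
  have "(\<forall>(u, v) \<in> E. \<forall>i j. i < length xs \<longrightarrow> j < length xs \<longrightarrow> xs ! i = u \<longrightarrow> xs ! j = v \<longrightarrow> i < j)
     \<longleftrightarrow> (\<forall>u\<in>set xs. \<forall>v\<in>set xs. (u,v) \<in> E \<longrightarrow> idx xs u < idx xs v)" if "distinct xs" for xs
  proof
    assume H: "\<forall>(u, v) \<in> E. \<forall>i j. i < length xs \<longrightarrow> j < length xs \<longrightarrow> xs ! i = u \<longrightarrow> xs ! j = v \<longrightarrow> i < j"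
    show "\<forall>u\<in>set xs. \<forall>v\<in>set xs. (u,v) \<in> E \<longrightarrow> idx xs u < idx xs v"
    proof (intro ballI impI)
      fix u v assume "(u,v) \<in> E" "u \<in> set xs" "v \<in> set xs"
      have "\<forall>i j. i < length xs \<longrightarrow> j < length xs \<longrightarrow> xs ! i = u \<longrightarrow> xs ! j = v \<longrightarrow> i < j"
        using H \<open>(u,v) \<in> E\<close> by auto
      then have "idx xs u < length xs \<longrightarrow> idx xs v < length xs \<longrightarrow> xs ! idx xs u = u \<longrightarrow> xs ! idx xs v = v \<longrightarrow> idx xs u < idx xs v"
        by blast
      then show "idx xs u < idx xs v" using \<open>u \<in> set xs\<close> \<open>v \<in> set xs\<close>
        by (simp add: index_less_size_conv nth_index)
    qed
  next
    assume H: "\<forall>u\<in>set xs. \<forall>v\<in>set xs. (u,v) \<in> E \<longrightarrow> idx xs u < idx xs v"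
    show "\<forall>(u, v) \<in> E. \<forall>i j. i < length xs \<longrightarrow> j < length xs \<longrightarrow> xs ! i = u \<longrightarrow> xs ! j = v \<longrightarrow> i < j"
    proof -
      { fix u v i j assume a: "(u,v) \<in> E" "i < length xs" "j < length xs" "xs ! i = u" "xs ! j = v"
      then have "idx xs u < idx xs v" using H nth_mem by blast
      then have "i < j" using a that by (auto simp: index_nth_id) }
      then show ?thesis by blast
    qed
  qed
  note key = this
  show ?thesis unfolding orderings_def ext_def
  proof (rule Collect_cong)
    fix xs
    show "(distinct xs \<and> set xs = {0..<n} \<and>
     (\<forall>(u, v) \<in> E. \<forall>i j. i < length xs \<longrightarrow> j < length xs \<longrightarrow> xs ! i = u \<longrightarrow> xs ! j = v \<longrightarrow> i < j)) =
      (distinct xs \<and> set xs = {0..<n} \<and>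
     (\<forall>u\<in>{0..<n}. \<forall>v\<in>{0..<n}. (u,v) \<in> E \<longrightarrow> idx xs u < idx xs v))"
    proof (cases "distinct xs \<and> set xs = {0..<n}")
      case True
      then show ?thesis using key[of xs] by simp
    qed auto
  qed
qed

lemma ext_cong: assumes "R \<inter> V \<times> V = R' \<inter> V \<times> V" shows "ext V R = ext V R'"
proof -
  have "\<And>u v. u \<in> V \<Longrightarrow> v \<in> V \<Longrightarrow> (u,v) \<in> R \<longleftrightarrow> (u,v) \<in> R'" using assms by blast
  then show ?thesis unfolding ext_def by meson
qed

lemma ext_mono: "R \<subseteq> R' \<Longrightarrow> ext V R' \<subseteq> ext V R"
  unfolding ext_def by (simp add: Collect_mono_iff subset_iff)

lemma ext_perm: "ext V R \<subseteq> permutations_of_set V"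
  unfolding ext_def permutations_of_set_def by blast

lemma finite_ext: "finite (ext V R)"
  by (rule finite_subset[OF ext_perm finite_permutations_of_set])

lemma ext_empty_rel: "ext V {} = permutations_of_set V"
  unfolding ext_def permutations_of_set_def by blast

lemma ext_trancl:
  assumes "R \<subseteq> V \<times> V"
  shows "ext V R \<subseteq> ext V (R\<^sup>+)"
proof
  fix xs assume xs: "xs \<in> ext V R"
  have "idx xs u < idx xs v" if "(u,v) \<in> R\<^sup>+" for u v
    using that
  proof (induction rule: trancl_induct)
    case (base y)
    then have "u \<in> V" "y \<in> V" using assms by auto
    then show ?case using xs base unfolding ext_def by auto
  next
    case (step y z)
    then have "y \<in> V" "z \<in> V" using assms by auto
    then have "idx xs y < idx xs z" using xs step unfolding ext_def by auto
    then show ?case using step.IH by simp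
  qed
  then show "xs \<in> ext V (R\<^sup>+)" using xs unfolding ext_def by auto
qed

lemma ext_emptyset: "ext {} R = {[]}"
  unfolding ext_def by auto

lemma ext_snoc:
  "(ys @ [v] \<in> ext V R) \<longleftrightarrow> v \<in> V \<and> (\<forall>w\<in>V. (v,w) \<notin> R) \<and> ys \<in> ext (V - {v}) R"
proof -
  have idx: "idx (ys @ [v]) u = idx ys u" if "u \<in> set ys" for u
    using that by (simp add: index_append)
  have idxv: "v \<notin> set ys \<Longrightarrow> idx (ys @ [v]) v = length ys"
    by (simp add: index_append)
  show ?thesis
  proof
    assume H: "ys @ [v] \<in> ext V R"
    then have d: "distinct ys" "v \<notin> set ys" "set ys = V - {v}" "v \<in> V"
      unfolding ext_def by auto
    have o: "\<forall>(a,b)\<in>R. a \<in> V \<longrightarrow> b \<in> V \<longrightarrow> idx (ys@[v]) a < idx (ys@[v]) b"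
      using H unfolding ext_def by auto
    have "\<forall>w\<in>V. (v,w) \<notin> R"
    proof (intro ballI notI)
      fix w assume "w \<in> V" "(v,w) \<in> R"
      then have "idx (ys@[v]) v < idx (ys@[v]) w" using o d by auto
      moreover have "idx (ys@[v]) w \<le> length ys"
        using \<open>w \<in> V\<close> d by (cases "w = v") (auto simp: idxv idx index_less_size_conv less_imp_le)
      ultimately show False using idxv d by simp
    qed
    moreover have "ys \<in> ext (V - {v}) R"
      unfolding ext_def using d o idx by fastforce
    ultimately show "v \<in> V \<and> (\<forall>w\<in>V. (v,w) \<notin> R) \<and> ys \<in> ext (V - {v}) R" using d by auto
  next
    assume H: "v \<in> V \<and> (\<forall>w\<in>V. (v,w) \<notin> R) \<and> ys \<in> ext (V - {v}) R"
    then have d: "distinct ys" "v \<notin> set ys" "set ys = V - {v}" "v \<in> V"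
      and o: "\<forall>(a,b)\<in>R. a \<in> V - {v} \<longrightarrow> b \<in> V - {v} \<longrightarrow> idx ys a < idx ys b"
      and m: "\<forall>w\<in>V. (v,w) \<notin> R"
      unfolding ext_def by auto
    have "idx (ys@[v]) a < idx (ys@[v]) b" if "(a,b) \<in> R" "a \<in> V" "b \<in> V" for a b
    proof (cases "b = v")
      case True
      then have "a \<noteq> v" using m that by auto
      then show ?thesis using True d that by (simp add: idx idxv index_less_size_conv)
    next
      case False
      then have "a \<noteq> v" using m that by auto
      then show ?thesis using False d that o idx by auto
    qed
    then show "ys @ [v] \<in> ext V R" unfolding ext_def using d by auto
  qed
qed

lemma ext_rec:
  assumes "V \<noteq> {}" "finite V"
  shows "card (ext V R) = (\<Sum>v\<in>{v\<in>V. \<forall>w\<in>V. (v,w) \<notin> R}. card (ext (V - {v}) R))"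
proof -
  let ?M = "{v\<in>V. \<forall>w\<in>V. (v,w) \<notin> R}"
  have eq: "ext V R = (\<Union>v\<in>?M. (\<lambda>ys. ys @ [v]) ` ext (V - {v}) R)"
  proof
    show "ext V R \<subseteq> (\<Union>v\<in>?M. (\<lambda>ys. ys @ [v]) ` ext (V - {v}) R)"
    proof
      fix xs assume xs: "xs \<in> ext V R"
      then have "xs \<noteq> []" using assms unfolding ext_def by auto
      then obtain ys v where "xs = ys @ [v]" by (metis rev_exhaust)
      then show "xs \<in> (\<Union>v\<in>?M. (\<lambda>ys. ys @ [v]) ` ext (V - {v}) R)"
        using xs ext_snoc by auto
    qed
  next
    show "(\<Union>v\<in>?M. (\<lambda>ys. ys @ [v]) ` ext (V - {v}) R) \<subseteq> ext V R"
      using ext_snoc by auto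
  qed
  have fin: "finite ?M"
    using assms by simp
  show ?thesis
    unfolding eq
    apply (subst card_UN_disjoint)
    using fin apply simp
    apply (simp add: finite_ext)
    apply auto[1]
    apply (rule sum.cong, simp)
    apply (rule card_image)
    apply (simp add: inj_on_def)
    done
qed



lemma ext_count_free: "finite V \<Longrightarrow> card (ext V {}) = fact (card V)"
  by (simp add: ext_empty_rel)

lemma fam1:
  assumes "finite V" "S \<subseteq> V" "w \<in> V" "w \<notin> S"
  shows "card (ext V (S \<times> {w})) * (card S + 1) = fact (card V)"
  using assms
proof (induction "card V" arbitrary: V)
  case 0 then show ?case by auto
next
  case (Suc m V)
  let ?R = "S \<times> {w}"
  have M: "{v\<in>V. \<forall>u\<in>V. (v,u) \<notin> ?R} = insert w (V - S - {w})"
    using Suc.prems by auto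
  have cw: "card (ext (V - {w}) ?R) = fact m"
  proof -
    have "ext (V - {w}) ?R = ext (V - {w}) {}" by (rule ext_cong) auto
    then have "card (ext (V - {w}) ?R) = fact (card V - 1)" using Suc.prems by (simp add: ext_empty_rel)
    then show ?thesis using Suc.hyps(2) by (metis diff_Suc_1)
  qed
  have cv: "card (ext (V - {v}) ?R) * (card S + 1) = fact m" if "v \<in> V - S - {w}" for v
  proof -
    have a: "m = card (V - {v})" using Suc.hyps(2) that Suc.prems(1) by simp
    have b: "S \<subseteq> V - {v}" using that Suc.prems(2) by auto
    have "card (ext (V - {v}) ?R) * (card S + 1) = fact (card (V - {v}))"
      using Suc.hyps(1)[OF a _ b] Suc.prems that by blast
    then show ?thesis using a by simp
  qed
  have ks: "card S + 1 + card (V - S - {w}) = Suc m"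
  proof -
    have "card (V - S - {w}) = card V - card S - 1"
      using Suc.prems by (simp add: card_Diff_subset finite_subset)
    moreover have "card S + 1 \<le> card V"
      using Suc.prems card_mono[of V "insert w S"] finite_subset by fastforce
    ultimately show ?thesis using Suc.hyps(2) by simp
  qed
  have "card (ext V ?R) = (\<Sum>v\<in>{v\<in>V. \<forall>u\<in>V. (v,u) \<notin> ?R}. card (ext (V - {v}) ?R))"
    by (rule ext_rec) (use Suc.prems in auto)
  also have "\<dots> = (\<Sum>v\<in>insert w (V - S - {w}). card (ext (V - {v}) ?R))" by (simp only: M)
  also have "\<dots> = card (ext (V - {w}) ?R) + (\<Sum>v\<in>V - S - {w}. card (ext (V - {v}) ?R))"
    by (rule sum.insert) (use Suc.prems in auto)
  finally have "card (ext V ?R) = card (ext (V - {w}) ?R) + (\<Sum>v\<in>V - S - {w}. card (ext (V - {v}) ?R))" .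
  then have "card (ext V ?R) * (card S + 1) = fact m * (card S + 1) + (\<Sum>v\<in>V - S - {w}. card (ext (V - {v}) ?R) * (card S + 1))"
    unfolding cw by (simp only: add_mult_distrib sum_distrib_right)
  also have "\<dots> = fact m * (card S + 1) + card (V - S - {w}) * fact m"
    using cv by simp
  also have "\<dots> = Suc m * fact m" using ks by (metis add_mult_distrib mult.commute)
  also have "\<dots> = fact (Suc m)" by simp
  finally show ?case using Suc.hyps(2) by metis
qed

lemma fam2:
  assumes "finite V" "A \<subseteq> V" "B \<subseteq> V" "a \<in> V" "b \<in> V" "a \<noteq> b" "A \<inter> B = {}"
    "a \<notin> A" "a \<notin> B" "b \<notin> A" "b \<notin> B"
  shows "card (ext V (A \<times> {a} \<union> B \<times> {b})) * ((card A + 1) * (card B + 1)) = fact (card V)"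
  using assms
proof (induction "card V" arbitrary: V)
  case 0 then show ?case by auto
next
  case (Suc m V)
  let ?R = "A \<times> {a} \<union> B \<times> {b}"
  let ?P = "(card A + 1) * (card B + 1)"
  let ?W = "V - A - B - {a, b}"
  have M: "{v\<in>V. \<forall>u\<in>V. (v,u) \<notin> ?R} = insert a (insert b ?W)"
    using Suc.prems by auto
  have fA: "finite A" "finite B" using Suc.prems(1,2,3) by (simp_all add: finite_subset)
  have ca: "card (ext (V - {a}) ?R) * ?P = fact m * (card A + 1)"
  proof -
    have "ext (V - {a}) ?R = ext (V - {a}) (B \<times> {b})" by (rule ext_cong) (use Suc.prems in auto)
    moreover have "card (ext (V - {a}) (B \<times> {b})) * (card B + 1) = fact (card (V - {a}))"
      by (rule fam1) (use Suc.prems in auto)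
    moreover have "card (V - {a}) = m" using Suc.prems Suc.hyps(2) by simp
    ultimately show ?thesis by (metis mult.assoc mult.commute)
  qed
  have cb: "card (ext (V - {b}) ?R) * ?P = fact m * (card B + 1)"
  proof -
    have "ext (V - {b}) ?R = ext (V - {b}) (A \<times> {a})" by (rule ext_cong) (use Suc.prems in auto)
    moreover have "card (ext (V - {b}) (A \<times> {a})) * (card A + 1) = fact (card (V - {b}))"
      by (rule fam1) (use Suc.prems in auto)
    moreover have "card (V - {b}) = m" using Suc.prems Suc.hyps(2) by simp
    ultimately show ?thesis by (metis mult.assoc)
  qed
  have cv: "card (ext (V - {v}) ?R) * ?P = fact m" if "v \<in> ?W" for v
  proof -
    have a: "m = card (V - {v})" using Suc.hyps(2) that Suc.prems(1) by simp
    have "card (ext (V - {v}) ?R) * ?P = fact (card (V - {v}))"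
      by (rule Suc.hyps(1)[OF a]) (use Suc.prems that in auto)
    then show ?thesis using a by simp
  qed
  have ks: "(card A + 1) + (card B + 1) + card ?W = Suc m"
  proof -
    have "?W = V - (A \<union> B \<union> {a, b})" by auto
    then have "card ?W = card V - card (A \<union> B \<union> {a, b})"
      using Suc.prems by (simp add: card_Diff_subset fA)
    moreover have "card (A \<union> B \<union> {a, b}) = card A + card B + 2"
      using Suc.prems fA by (simp add: card_Un_disjoint card_insert_if)
    moreover have "card (A \<union> B \<union> {a, b}) \<le> card V"
      using Suc.prems by (intro card_mono) auto
    ultimately show ?thesis using Suc.hyps(2) by simp
  qed
  have "card (ext V ?R) = (\<Sum>v\<in>{v\<in>V. \<forall>u\<in>V. (v,u) \<notin> ?R}. card (ext (V - {v}) ?R))"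
    by (rule ext_rec) (use Suc.prems in auto)
  also have "\<dots> = (\<Sum>v\<in>insert a (insert b ?W). card (ext (V - {v}) ?R))" by (simp only: M)
  also have "\<dots> = card (ext (V - {a}) ?R) + (card (ext (V - {b}) ?R) + (\<Sum>v\<in>?W. card (ext (V - {v}) ?R)))"
    using Suc.prems by (simp add: sum.insert)
  finally have "card (ext V ?R) * ?P = card (ext (V - {a}) ?R) * ?P + (card (ext (V - {b}) ?R) * ?P + (\<Sum>v\<in>?W. card (ext (V - {v}) ?R) * ?P))"
    by (simp only: add_mult_distrib sum_distrib_right)
  also have "(\<Sum>v\<in>?W. card (ext (V - {v}) ?R) * ?P) = card ?W * fact m"
    using cv by simp
  also note ca also note cb
  also have "fact m * (card A + 1) + (fact m * (card B + 1) + card ?W * fact m) = fact m * ((card A + 1) + (card B + 1) + card ?W)"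
    by (simp only: add_mult_distrib2 mult.commute add.assoc)
  also have "\<dots> = fact (Suc m)" by (simp only: ks fact_Suc mult.commute of_nat_id)
  finally show ?case using Suc.hyps(2) by metis
qed

lemma fam3:
  assumes "finite V" "Q \<subseteq> V" "u \<in> V" "a \<in> V" "b \<in> V" "u \<noteq> a" "u \<noteq> b" "a \<noteq> b"
    "u \<notin> Q" "a \<notin> Q" "b \<notin> Q"
  shows "card (ext V ({(u,a),(a,b)} \<union> Q \<times> {b})) * (2 * (card Q + 3)) = fact (card V)"
  using assms
proof (induction "card V" arbitrary: V)
  case 0 then show ?case by auto
next
  case (Suc m V)
  let ?R = "{(u,a),(a,b)} \<union> Q \<times> {b}"
  let ?P = "2 * (card Q + 3)"
  let ?W = "V - Q - {u, a, b}"
  have M: "{v\<in>V. \<forall>w\<in>V. (v,w) \<notin> ?R} = insert b ?W"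
    using Suc.prems by auto
  have fQ: "finite Q" using Suc.prems(1,2) by (simp add: finite_subset)
  have cb: "card (ext (V - {b}) ?R) * ?P = fact m * (card Q + 3)"
  proof -
    have "ext (V - {b}) ?R = ext (V - {b}) ({u} \<times> {a})" by (rule ext_cong) (use Suc.prems in auto)
    moreover have "card (ext (V - {b}) ({u} \<times> {a})) * (card {u} + 1) = fact (card (V - {b}))"
      by (rule fam1) (use Suc.prems in auto)
    moreover have "card (V - {b}) = m" using Suc.prems Suc.hyps(2) by simp
    ultimately have "card (ext (V - {b}) ?R) * 2 = fact m" by simp
    then show ?thesis by (metis mult.assoc)
  qed
  have cv: "card (ext (V - {v}) ?R) * ?P = fact m" if "v \<in> ?W" for v
  proof -
    have a: "m = card (V - {v})" using Suc.hyps(2) that Suc.prems(1) by simp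
    have "card (ext (V - {v}) ?R) * ?P = fact (card (V - {v}))"
      by (rule Suc.hyps(1)[OF a]) (use Suc.prems that in auto)
    then show ?thesis using a by simp
  qed
  have ks: "(card Q + 3) + card ?W = Suc m"
  proof -
    have "?W = V - (Q \<union> {u, a, b})" by auto
    then have "card ?W = card V - card (Q \<union> {u, a, b})"
      using Suc.prems by (simp add: card_Diff_subset fQ)
    moreover have "card (Q \<union> {u, a, b}) = card Q + 3"
      using Suc.prems fQ by (simp add: card_insert_if)
    moreover have "card (Q \<union> {u, a, b}) \<le> card V"
      using Suc.prems by (intro card_mono) auto
    ultimately show ?thesis using Suc.hyps(2) by simp
  qed
  have "card (ext V ?R) = (\<Sum>v\<in>{v\<in>V. \<forall>w\<in>V. (v,w) \<notin> ?R}. card (ext (V - {v}) ?R))"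
    by (rule ext_rec) (use Suc.prems in auto)
  also have "\<dots> = (\<Sum>v\<in>insert b ?W. card (ext (V - {v}) ?R))" by (simp only: M)
  also have "\<dots> = card (ext (V - {b}) ?R) + (\<Sum>v\<in>?W. card (ext (V - {v}) ?R))"
    using Suc.prems by (simp add: sum.insert)
  finally have "card (ext V ?R) * ?P = card (ext (V - {b}) ?R) * ?P + (\<Sum>v\<in>?W. card (ext (V - {v}) ?R) * ?P)"
    by (simp only: add_mult_distrib sum_distrib_right)
  also have "\<dots> = fact m * (card Q + 3) + card ?W * fact m"
    using cb cv by simp
  also have "\<dots> = Suc m * fact m" using ks by (metis add_mult_distrib mult.commute)
  also have "\<dots> = fact (Suc m)" by simp
  finally show ?case using Suc.hyps(2) by metis
qed

lemma fam5:
  assumes "finite V" "s \<in> V" "R \<inter> V \<times> V = {s} \<times> (V - {s})"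
  shows "card (ext V R) = fact (card V - 1)"
  using assms
proof (induction "card V" arbitrary: V)
  case 0 then show ?case by auto
next
  case (Suc m V)
  have key: "(p,q) \<in> R \<longleftrightarrow> (p = s \<and> q \<noteq> s)" if "p \<in> V" "q \<in> V" for p q
  proof -
    have "(p,q) \<in> R \<inter> V \<times> V \<longleftrightarrow> (p,q) \<in> {s} \<times> (V - {s})"
      using Suc.prems(3) by simp
    then show ?thesis using that by auto
  qed
  show ?case
  proof (cases "V = {s}")
    case True
    have "card (ext V R) = (\<Sum>v\<in>{v\<in>V. \<forall>w\<in>V. (v,w) \<notin> R}. card (ext (V - {v}) R))"
      by (rule ext_rec) (use Suc.prems in auto)
    also have "{v\<in>V. \<forall>w\<in>V. (v,w) \<notin> R} = {s}" using True key by auto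
    finally show ?thesis using True by (simp add: ext_emptyset)
  next
    case False
    have M: "{v\<in>V. \<forall>w\<in>V. (v,w) \<notin> R} = V - {s}"
    proof
      show "{v\<in>V. \<forall>w\<in>V. (v,w) \<notin> R} \<subseteq> V - {s}"
      proof
        fix v assume v: "v \<in> {v\<in>V. \<forall>w\<in>V. (v,w) \<notin> R}"
        obtain w where "w \<in> V" "w \<noteq> s" using False Suc.prems(2) by blast
        then show "v \<in> V - {s}" using v key by auto
      qed
      show "V - {s} \<subseteq> {v\<in>V. \<forall>w\<in>V. (v,w) \<notin> R}" using key by auto
    qed
    have cv: "card (ext (V - {v}) R) = fact (m - 1)" if "v \<in> V - {s}" for v
    proof -
      have a: "m = card (V - {v})" using Suc.hyps(2) that Suc.prems(1) by simp
      have "card (ext (V - {v}) R) = fact (card (V - {v}) - 1)"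
      proof (rule Suc.hyps(1)[OF a])
        show "R \<inter> (V - {v}) \<times> (V - {v}) = {s} \<times> (V - {v} - {s})" using key that Suc.prems(2) by auto
      qed (use Suc.prems that in auto)
      then show ?thesis using a by simp
    qed
    have m1: "m \<ge> 1"
    proof -
      obtain v where "v \<in> V" "v \<noteq> s" using False Suc.prems by blast
      then have "card {s, v} \<le> card V" using Suc.prems by (intro card_mono) auto
      then show ?thesis using Suc.hyps(2) \<open>v \<noteq> s\<close> by simp
    qed
    have "card (ext V R) = (\<Sum>v\<in>{v\<in>V. \<forall>w\<in>V. (v,w) \<notin> R}. card (ext (V - {v}) R))"
      by (rule ext_rec) (use Suc.prems in auto)
    also have "\<dots> = (\<Sum>v\<in>V - {s}. fact (m - 1))" unfolding M using cv by simp
    also have "\<dots> = m * fact (m - 1)" using Suc.prems Suc.hyps(2) by simp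
    also have "\<dots> = fact m" using m1 by (cases m) auto
    finally show ?thesis using Suc.hyps(2) by (metis diff_Suc_1)
  qed
qed

lemma fam4:
  assumes "finite V" "s \<in> V" "t \<in> V" "s \<noteq> t" "R \<inter> V \<times> V = {s} \<times> (V - {s}) \<union> (V - {t}) \<times> {t}"
  shows "card (ext V R) = fact (card V - 2)"
proof -
  have key: "(p,q) \<in> R \<longleftrightarrow> (p = s \<and> q \<noteq> s \<or> q = t \<and> p \<noteq> t)" if "p \<in> V" "q \<in> V" for p q
  proof -
    have "(p,q) \<in> R \<inter> V \<times> V \<longleftrightarrow> (p,q) \<in> {s} \<times> (V - {s}) \<union> (V - {t}) \<times> {t}"
      using assms(5) by simp
    then show ?thesis using that by auto
  qed
  have M: "{v\<in>V. \<forall>w\<in>V. (v,w) \<notin> R} = {t}"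
  proof
    show "{v\<in>V. \<forall>w\<in>V. (v,w) \<notin> R} \<subseteq> {t}" using key assms(3) by auto
    show "{t} \<subseteq> {v\<in>V. \<forall>w\<in>V. (v,w) \<notin> R}" using key assms(3,4) by auto
  qed
  have R': "R \<inter> (V - {t}) \<times> (V - {t}) = {s} \<times> (V - {t} - {s})"
    using key assms(2,4) by auto
  have "card (ext V R) = (\<Sum>v\<in>{v\<in>V. \<forall>w\<in>V. (v,w) \<notin> R}. card (ext (V - {v}) R))"
    by (rule ext_rec) (use assms in auto)
  also have "\<dots> = card (ext (V - {t}) R)" unfolding M by simp
  also have "\<dots> = fact (card (V - {t}) - 1)"
    by (rule fam5) (use assms R' in auto)
  finally show ?thesis using assms by (simp add: numeral_2_eq_2)
qed



lemma num_ext: "num_orderings n E = card (ext {0..<n} E)"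
  by (simp add: num_orderings_def orderings_ext)

lemma upper_sub:
  assumes "tdg n E" "R \<subseteq> E\<^sup>+"
  shows "num_orderings n E \<le> card (ext {0..<n} R)"
proof -
  have "E \<subseteq> {0..<n} \<times> {0..<n}" using assms(1) by (simp add: tdg_def)
  then have "ext {0..<n} E \<subseteq> ext {0..<n} (E\<^sup>+)" by (rule ext_trancl)
  also have "\<dots> \<subseteq> ext {0..<n} R" by (rule ext_mono[OF assms(2)])
  finally show ?thesis unfolding num_ext by (intro card_mono finite_ext)
qed

lemma upper_all: "num_orderings n E \<le> fact n"
proof -
  have "num_orderings n E \<le> card (permutations_of_set {0..<n})"
    unfolding num_ext by (intro card_mono ext_perm) simp
  then show ?thesis by simp
qed

lemma acyclic_incr: "E \<subseteq> {(u,v). u < (v::nat)} \<Longrightarrow> acyclic E"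
  by (rule wf_acyclic, rule wf_subset[OF wf_less]) auto

lemma no_loop: "tdg n E \<Longrightarrow> (v,v) \<notin> E"
  unfolding tdg_def acyclic_def by auto

lemma no_2cycle: "tdg n E \<Longrightarrow> (u,v) \<in> E \<Longrightarrow> (v,u) \<notin> E"
  unfolding tdg_def acyclic_def by (meson trancl.r_into_trancl trancl_into_trancl)

lemma tdg_sub: "tdg n E \<Longrightarrow> (u,v) \<in> E \<Longrightarrow> u < n \<and> v < n"
  unfolding tdg_def by auto

lemma init_sub: "initial_vertices n E \<subseteq> {0..<n}"
  unfolding initial_vertices_def by auto

lemma term_sub: "terminal_vertices n E \<subseteq> {0..<n}"
  unfolding terminal_vertices_def by auto

lemma real_div_eq: "a * d = b \<Longrightarrow> d > 0 \<Longrightarrow> real a = real b / real d"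
  by (metis nonzero_eq_divide_eq of_nat_eq_0_iff of_nat_mult not_gr0)

lemma real_div_le: "a * d \<le> b \<Longrightarrow> d > 0 \<Longrightarrow> real a \<le> real b / real d"
  by (metis mult_imp_le_div_pos of_nat_0_less_iff of_nat_le_iff of_nat_mult)

lemma max_intro:
  assumes "xy_tdg x y n E0" "real (num_orderings n E0) = m"
    "\<And>E. xy_tdg x y n E \<Longrightarrow> real (num_orderings n E) \<le> m"
  shows "max_orderings_is x y n m"
  unfolding max_orderings_is_def using assms by blast

lemma p1_eq:
  assumes "xy_tdg x y x E" shows "x = y"
proof -
  have t: "tdg x E" and ci: "card (initial_vertices x E) = x" and ct: "card (terminal_vertices x E) = y"
    using assms unfolding xy_tdg_def by auto
  have I: "initial_vertices x E = {0..<x}"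
    using card_subset_eq[OF _ init_sub] ci by simp
  have "E = {}"
  proof (rule ccontr)
    assume "E \<noteq> {}"
    then obtain u v where uv: "(u,v) \<in> E" by auto
    then have "v \<in> {0..<x}" using tdg_sub[OF t] by auto
    then have "v \<in> initial_vertices x E" using I by simp
    then show False using uv unfolding initial_vertices_def by auto
  qed
  then have "terminal_vertices x E = {0..<x}" unfolding terminal_vertices_def by auto
  then show ?thesis using ct by simp
qed

lemma p1_max: "max_orderings_is x x x (real (fact x))"
proof (rule max_intro)
  show "xy_tdg x x x {}"
    unfolding xy_tdg_def tdg_def initial_vertices_def terminal_vertices_def acyclic_def by simp
  show "real (num_orderings x {}) = real (fact x)"
    unfolding num_ext ext_empty_rel by simp
  show "real (num_orderings x E) \<le> real (fact x)" for E
    using upper_all[of x E] by (metis of_nat_le_iff)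
qed

lemma p2_count:
  assumes "xy_tdg x y (x+1) E" "1 \<le> y" "y \<le> x"
  shows "num_orderings (x+1) E * (x - y + 2) = fact (x + 1)"
proof -
  let ?V = "{0..<x+1}"
  let ?I = "initial_vertices (x+1) E"
  let ?T = "terminal_vertices (x+1) E"
  have t: "tdg (x+1) E" and ci: "card ?I = x" and ct: "card ?T = y"
    using assms unfolding xy_tdg_def by auto
  have Isub: "?I \<subseteq> ?V" by (rule init_sub)
  have "finite ?I" using Isub finite_subset by blast
  have "card (?V - ?I) = card ?V - card ?I" by (rule card_Diff_subset[OF \<open>finite ?I\<close> Isub])
  then have "card (?V - ?I) = 1" using ci by simp
  then obtain w where w: "?V - ?I = {w}" using card_1_singletonE by blast
  have wV: "w \<in> ?V" using w by auto
  have edge: "v = w \<and> u \<noteq> w \<and> u \<in> ?V" if "(u,v) \<in> E" for u v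
  proof -
    have "u \<in> ?V" "v \<in> ?V" using tdg_sub[OF t that] by auto
    moreover have "v \<notin> ?I" using that unfolding initial_vertices_def by auto
    ultimately have "v = w" using w by blast
    then show ?thesis using no_loop[OF t] that \<open>u \<in> ?V\<close> by auto
  qed
  define S where "S = {u. (u,w) \<in> E}"
  have ES: "E = S \<times> {w}" unfolding S_def using edge by auto
  have SV: "S \<subseteq> ?V" "w \<notin> S" unfolding S_def using edge by auto
  have T: "?T = ?V - S"
    unfolding terminal_vertices_def S_def using edge by auto
  have "card ?T = x + 1 - card S"
    unfolding T using SV by (simp add: card_Diff_subset finite_subset)
  moreover have "card S \<le> x + 1" using SV card_mono[of ?V S] by simp
  ultimately have cS: "card S + 1 = x - y + 2" using ct assms(2,3) by linarith
  have "card (ext ?V (S \<times> {w})) * (card S + 1) = fact (card ?V)"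
    by (rule fam1) (use SV wV in auto)
  then show ?thesis unfolding num_ext ES cS by simp
qed

lemma p2_max:
  assumes "1 \<le> y" "y \<le> x"
  shows "max_orderings_is x y (x+1) (real (fact (x + 1)) / real (x - y + 2))"
proof (rule max_intro)
  let ?S = "{0..<x+1-y}"
  let ?E = "?S \<times> {x}"
  have sub: "?E \<subseteq> {0..<x+1} \<times> {0..<x+1}" using assms by auto
  have ac: "acyclic ?E" by (rule acyclic_incr) (use assms in auto)
  have e0: "(0, x) \<in> ?E" using assms by auto
  have I: "initial_vertices (x+1) ?E = {0..<x}"
    unfolding initial_vertices_def using assms e0 by fastforce
  have T: "terminal_vertices (x+1) ?E = {0..<x+1} - ?S"
    unfolding terminal_vertices_def using assms by auto
  show xy: "xy_tdg x y (x+1) ?E"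
    unfolding xy_tdg_def tdg_def using sub ac I T assms by (simp add: card_Diff_subset)
  show "real (num_orderings (x+1) ?E) = real (fact (x + 1)) / real (x - y + 2)"
    using p2_count[OF xy assms] by (intro real_div_eq) auto
  show "real (num_orderings (x+1) E) \<le> real (fact (x + 1)) / real (x - y + 2)" if "xy_tdg x y (x+1) E" for E
    using p2_count[OF that assms] by (intro real_div_le) auto
qed

lemma real_div_eq2: "a * (2 * d) = b \<Longrightarrow> d > 0 \<Longrightarrow> real a = real b / (2 * real d)"
  using real_div_eq[of a "2*d" b] by simp

lemma real_div_le2: "a * (2 * d) \<le> b \<Longrightarrow> d > 0 \<Longrightarrow> real a \<le> real b / (2 * real d)"
  using real_div_le[of a "2*d" b] by simp

lemma p3_setup:
  assumes "xy_tdg x y (x+2) E"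
  obtains a b where "{0..<x+2} - initial_vertices (x+2) E = {a,b}" "a \<noteq> b"
proof -
  let ?V = "{0..<x+2}"
  let ?I = "initial_vertices (x+2) E"
  have ci: "card ?I = x" using assms unfolding xy_tdg_def by auto
  have Isub: "?I \<subseteq> ?V" by (rule init_sub)
  have "finite ?I" using Isub finite_subset by blast
  have "card (?V - ?I) = card ?V - card ?I" by (rule card_Diff_subset[OF \<open>finite ?I\<close> Isub])
  then have "card (?V - ?I) = 2" using ci by simp
  then show ?thesis using that by (auto simp: card_2_iff)
qed

lemma case_ab:
  assumes t: "tdg n E" and ab: "{0..<n} - initial_vertices n E = {a,b}" "a \<noteq> b" "(a,b) \<in> E"
  shows "num_orderings n E * (2 * (card (initial_vertices n E) + 3 - card (terminal_vertices n E))) \<le> fact n"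
proof -
  let ?V = "{0..<n}"
  let ?I = "initial_vertices n E"
  let ?T = "terminal_vertices n E"
  have Isub: "?I \<subseteq> ?V" by (rule init_sub)
  have fI: "finite ?I" using Isub finite_subset by blast
  have abV: "a \<in> ?V" "b \<in> ?V" "a \<notin> ?I" "b \<notin> ?I" using ab by auto
  have I: "?I = ?V - {a,b}" using ab Isub by auto
  have edge: "u \<in> ?V \<and> v \<in> {a,b} \<and> u \<noteq> v" if "(u,v) \<in> E" for u v
  proof -
    have "u \<in> ?V" "v \<in> ?V" using tdg_sub[OF t that] by auto
    moreover have "v \<notin> ?I" using that unfolding initial_vertices_def by auto
    ultimately show ?thesis using ab no_loop[OF t] that by auto
  qed
  have ba: "(b,a) \<notin> E" using no_2cycle[OF t ab(3)] .
  define A where "A = {u. (u,a) \<in> E}"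
  define B where "B = {u. (u,b) \<in> E} - {a}"
  have AI: "A \<subseteq> ?I" unfolding A_def I using edge ba by auto
  have BI: "B \<subseteq> ?I" unfolding B_def I using edge by auto
  have "A \<noteq> {}" using abV(1,3) unfolding A_def initial_vertices_def by auto
  then obtain u0 where u0: "u0 \<in> A" by blast
  have T: "?T = insert b (?I - (A \<union> B))"
  proof (rule set_eqI)
    fix v
    show "v \<in> ?T \<longleftrightarrow> v \<in> insert b (?I - (A \<union> B))"
    proof (cases "v = b")
      case True
      have "\<forall>w. (b,w) \<notin> E" using edge ba ab(2) by blast
      then show ?thesis using True abV unfolding terminal_vertices_def by auto
    next
      case False
      show ?thesis
      proof (cases "v = a")
        case True
        then show ?thesis using ab(2,3) abV unfolding terminal_vertices_def by auto
      next
        case False2: False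
        have "v \<in> ?T \<longleftrightarrow> v \<in> ?V \<and> (\<forall>w. (v,w) \<notin> E)" unfolding terminal_vertices_def by simp
        also have "\<dots> \<longleftrightarrow> v \<in> ?V \<and> (v,a) \<notin> E \<and> (v,b) \<notin> E" using edge by blast
        also have "\<dots> \<longleftrightarrow> v \<in> insert b (?I - (A \<union> B))"
          using False False2 unfolding A_def B_def I by auto
        finally show ?thesis .
      qed
    qed
  qed
  have fAB: "finite (A \<union> B)" using AI BI fI finite_subset by blast
  have cT: "card ?T = 1 + card ?I - card (A \<union> B)"
  proof -
    have "card ?T = Suc (card (?I - (A \<union> B)))" unfolding T using fI abV by simp
    also have "card (?I - (A \<union> B)) = card ?I - card (A \<union> B)"
      by (rule card_Diff_subset[OF fAB]) (use AI BI in auto)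
    finally show ?thesis using card_mono[OF fI, of "A \<union> B"] AI BI by simp
  qed
  have pI: "card (A \<union> B) \<le> card ?I" using card_mono[OF fI, of "A \<union> B"] AI BI by simp
  have p1: "card (A \<union> B) \<ge> 1" using u0 fAB by (metis Un_iff card_0_eq empty_iff less_one not_le)
  define Q where "Q = (A \<union> B) - {u0}"
  have cQ: "card Q + 3 = card ?I + 3 - card ?T"
  proof -
    have "card Q = card (A \<union> B) - 1" unfolding Q_def using u0 fAB by simp
    then show ?thesis using cT pI p1 by simp
  qed
  let ?R = "{(u0,a),(a,b)} \<union> Q \<times> {b}"
  have RE: "?R \<subseteq> E\<^sup>+"
  proof
    fix p assume "p \<in> ?R"
    then consider "p = (u0,a)" | "p = (a,b)" | q where "q \<in> Q" "p = (q,b)" by auto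
    then show "p \<in> E\<^sup>+"
    proof cases
      case 1 then show ?thesis using u0 unfolding A_def by auto
    next
      case 2 then show ?thesis using ab(3) by auto
    next
      case 3
      then have "q \<in> A \<or> q \<in> B" unfolding Q_def by auto
      then show ?thesis
      proof
        assume "q \<in> A"
        then have "(q,a) \<in> E" unfolding A_def by auto
        then show ?thesis using 3 ab(3) by (meson r_into_trancl' trancl_into_trancl)
      next
        assume "q \<in> B"
        then show ?thesis using 3 unfolding B_def by auto
      qed
    qed
  qed
  have u0I: "u0 \<in> ?I" using u0 AI by auto
  have "card (ext ?V ?R) * (2 * (card Q + 3)) = fact (card ?V)"
  proof (rule fam3)
    show "Q \<subseteq> ?V" unfolding Q_def using AI BI Isub by auto
  qed (use abV u0I AI BI ab(2) Isub in \<open>auto simp: Q_def\<close>)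
  then have "card (ext ?V ?R) * (2 * (card ?I + 3 - card ?T)) = fact n" using cQ by simp
  moreover have "num_orderings n E \<le> card (ext ?V ?R)" by (rule upper_sub[OF t RE])
  ultimately show ?thesis by (metis mult_le_mono1)
qed

lemma prod_ge: "s \<ge> 1 \<Longrightarrow> t \<ge> 1 \<Longrightarrow> 2 * (s + t) \<le> (s + 1) * (t + (1::nat))"
proof -
  assume "s \<ge> 1" "t \<ge> 1"
  then obtain s' t' where "s = s' + 1" "t = t' + 1" by (metis le_add_diff_inverse2)
  then show ?thesis by (simp add: algebra_simps)
qed

lemma case_none:
  assumes t: "tdg n E" and ab: "{0..<n} - initial_vertices n E = {a,b}" "a \<noteq> b" "(a,b) \<notin> E" "(b,a) \<notin> E"
    and le: "card (terminal_vertices n E) \<le> card (initial_vertices n E)"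
  shows "num_orderings n E * (2 * (card (initial_vertices n E) + 2 - card (terminal_vertices n E))) \<le> fact n"
    and "card (terminal_vertices n E) \<ge> 2"
proof -
  let ?V = "{0..<n}"
  let ?I = "initial_vertices n E"
  let ?T = "terminal_vertices n E"
  have Isub: "?I \<subseteq> ?V" by (rule init_sub)
  have fI: "finite ?I" using Isub finite_subset by blast
  have abV: "a \<in> ?V" "b \<in> ?V" "a \<notin> ?I" "b \<notin> ?I" using ab by auto
  have I: "?I = ?V - {a,b}" using ab Isub by auto
  have edge: "u \<in> ?V \<and> v \<in> {a,b} \<and> u \<noteq> v" if "(u,v) \<in> E" for u v
  proof -
    have "u \<in> ?V" "v \<in> ?V" using tdg_sub[OF t that] by auto
    moreover have "v \<notin> ?I" using that unfolding initial_vertices_def by auto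
    ultimately show ?thesis using ab no_loop[OF t] that by auto
  qed
  define A where "A = {u. (u,a) \<in> E}"
  define B where "B = {u. (u,b) \<in> E}"
  have AI: "A \<subseteq> ?I" unfolding A_def I using edge ab(4) by auto
  have BI: "B \<subseteq> ?I" unfolding B_def I using edge ab(3) by auto
  have Ane: "A \<noteq> {}" using abV(1,3) unfolding A_def initial_vertices_def by auto
  have Bne: "B \<noteq> {}" using abV(2,4) unfolding B_def initial_vertices_def by auto
  have T: "?T = {a,b} \<union> (?I - (A \<union> B))"
  proof (rule set_eqI)
    fix v
    show "v \<in> ?T \<longleftrightarrow> v \<in> {a,b} \<union> (?I - (A \<union> B))"
    proof (cases "v = a \<or> v = b")
      case True
      have "\<forall>w. (v,w) \<notin> E" using edge ab(2,3,4) True by blast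
      then show ?thesis using True abV unfolding terminal_vertices_def by auto
    next
      case False
      have "v \<in> ?T \<longleftrightarrow> v \<in> ?V \<and> (\<forall>w. (v,w) \<notin> E)" unfolding terminal_vertices_def by simp
      also have "\<dots> \<longleftrightarrow> v \<in> ?V \<and> (v,a) \<notin> E \<and> (v,b) \<notin> E" using edge by blast
      also have "\<dots> \<longleftrightarrow> v \<in> {a,b} \<union> (?I - (A \<union> B))"
        using False unfolding A_def B_def I by auto
      finally show ?thesis .
    qed
  qed
  have fAB: "finite (A \<union> B)" using AI BI fI finite_subset by blast
  have fA: "finite A" "finite B" using fAB by auto
  have pI: "card (A \<union> B) \<le> card ?I" using card_mono[OF fI, of "A \<union> B"] AI BI by simp
  have cT: "card ?T = 2 + card ?I - card (A \<union> B)"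
  proof -
    have "card ?T = card {a,b} + card (?I - (A \<union> B))" unfolding T
      by (rule card_Un_disjoint) (use fI abV in auto)
    also have "card (?I - (A \<union> B)) = card ?I - card (A \<union> B)"
      by (rule card_Diff_subset[OF fAB]) (use AI BI in auto)
    finally show ?thesis using pI ab(2) by simp
  qed
  then show "card ?T \<ge> 2" using pI by simp
  have p2: "card (A \<union> B) \<ge> 2" using cT le pI by simp
  obtain A' B' where AB': "A' \<subseteq> A" "B' \<subseteq> B" "A' \<inter> B' = {}" "A' \<noteq> {}" "B' \<noteq> {}" "A' \<union> B' = A \<union> B"
  proof (cases "B - A = {}")
    case False
    show ?thesis by (rule that[of A "B - A"]) (use False Ane in auto)
  next
    case True
    then have BA: "B \<subseteq> A" by auto
    then have "A \<union> B = A" by auto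
    then have cA: "card A \<ge> 2" using p2 by simp
    obtain c where c: "c \<in> B" using Bne by auto
    have Ac: "A - {c} \<noteq> {}"
    proof
      assume "A - {c} = {}"
      then have "A \<subseteq> {c}" by auto
      then have "card A \<le> 1" using card_mono[of "{c}" A] by simp
      then show False using cA by simp
    qed
    show ?thesis by (rule that[of "A - {c}" "{c}"]) (use c BA Ac in auto)
  qed
  have fA': "finite A'" "finite B'" using AB'(1,2) fA by (simp_all add: finite_subset)
  have cAB: "card (A \<union> B) = card A' + card B'" using AB' fA' card_Un_disjoint by metis
  have ge1: "card A' \<ge> 1" "card B' \<ge> 1" using AB' fA' by (auto simp: Suc_le_eq card_gt_0_iff)
  let ?R = "A' \<times> {a} \<union> B' \<times> {b}"
  have RE: "?R \<subseteq> E\<^sup>+" using AB' unfolding A_def B_def by auto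
  have "card (ext ?V ?R) * ((card A' + 1) * (card B' + 1)) = fact (card ?V)"
    by (rule fam2) (use abV AB' AI BI Isub ab(2) in auto)
  moreover have "num_orderings n E \<le> card (ext ?V ?R)" by (rule upper_sub[OF t RE])
  moreover have "2 * (card ?I + 2 - card ?T) \<le> (card A' + 1) * (card B' + 1)"
    using prod_ge[OF ge1] cT cAB pI by simp
  ultimately show "num_orderings n E * (2 * (card ?I + 2 - card ?T)) \<le> fact n"
    by (metis card_atLeastLessThan diff_zero mult_le_mono)
qed

lemma p3_bound:
  assumes xy: "xy_tdg x y (x+2) E" and y: "1 \<le> y" "y \<le> x"
  shows "(y = 1 \<longrightarrow> num_orderings (x+2) E * (2 * (x - y + 3)) \<le> fact (x+2)) \<and>
         (1 < y \<longrightarrow> num_orderings (x+2) E * (2 * (x - y + 2)) \<le> fact (x+2))"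
proof -
  have t: "tdg (x+2) E" and ci: "card (initial_vertices (x+2) E) = x"
    and ct: "card (terminal_vertices (x+2) E) = y" using xy unfolding xy_tdg_def by auto
  obtain a b where ab: "{0..<x+2} - initial_vertices (x+2) E = {a,b}" "a \<noteq> b"
    using p3_setup[OF xy] by blast
  have ab3: "num_orderings (x+2) E * (2 * (x - y + 3)) \<le> fact (x+2)"
    if "(a,b) \<in> E \<or> (b,a) \<in> E"
  proof -
    have "num_orderings (x+2) E * (2 * (x + 3 - y)) \<le> fact (x+2)"
      using that
    proof
      assume "(a,b) \<in> E"
      from case_ab[OF t ab this] show ?thesis using ci ct by simp
    next
      assume "(b,a) \<in> E"
      from case_ab[OF t _ _ this] ab show ?thesis using ci ct by (simp add: insert_commute)
    qed
    then show ?thesis using y by (simp add: Suc_diff_le)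
  qed
  show ?thesis
  proof (cases "(a,b) \<in> E \<or> (b,a) \<in> E")
    case True
    have "num_orderings (x+2) E * (2 * (x - y + 2)) \<le> num_orderings (x+2) E * (2 * (x - y + 3))"
      by (intro mult_le_mono2) simp
    then show ?thesis using ab3[OF True] by linarith
  next
    case False
    then have n: "(a,b) \<notin> E" "(b,a) \<notin> E" by auto
    have le: "card (terminal_vertices (x+2) E) \<le> card (initial_vertices (x+2) E)" using ci ct y by simp
    have "card (terminal_vertices (x+2) E) \<ge> 2" by (rule case_none(2)[OF t ab n le])
    moreover have "num_orderings (x+2) E * (2 * (x + 2 - y)) \<le> fact (x+2)"
      using case_none(1)[OF t ab n le] ci ct by simp
    ultimately show ?thesis using ct y by (simp add: Suc_diff_le)
  qed
qed

lemma p3a_max: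
  assumes y: "1 < y" "y \<le> x"
  shows "max_orderings_is x y (x+2) (real (fact (x + 2)) / (2 * real (x - y + 2)))"
proof (rule max_intro)
  define p where "p = x - y + 2"
  have p: "2 \<le> p" "p \<le> x" using y unfolding p_def by auto
  let ?E = "{0} \<times> {x} \<union> {1..<p} \<times> {x+1}"
  have sub: "?E \<subseteq> {0..<x+2} \<times> {0..<x+2}" using p by auto
  have ac: "acyclic ?E" by (rule acyclic_incr) (use p in auto)
  have e: "(0, x) \<in> ?E" "(1, x+1) \<in> ?E" using p by auto
  have I: "initial_vertices (x+2) ?E = {0..<x}"
  proof -
    have "initial_vertices (x+2) ?E \<subseteq> {0..<x}"
      unfolding initial_vertices_def using e by (auto simp: less_Suc_eq)
    moreover have "{0..<x} \<subseteq> initial_vertices (x+2) ?E"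
      unfolding initial_vertices_def by auto
    ultimately show ?thesis by blast
  qed
  have out: "(\<exists>w. (v,w) \<in> ?E) \<longleftrightarrow> v < p" for v
  proof
    assume "\<exists>w. (v,w) \<in> ?E" then show "v < p" using p by auto
  next
    assume vp: "v < p"
    show "\<exists>w. (v,w) \<in> ?E"
    proof (cases "v = 0")
      case True then show ?thesis by auto
    next
      case False then have "(v,x+1) \<in> ?E" using vp by auto
      then show ?thesis by blast
    qed
  qed
  have "terminal_vertices (x+2) ?E = {v\<in>{0..<x+2}. \<not> (\<exists>w. (v,w) \<in> ?E)}"
    unfolding terminal_vertices_def by blast
  also have "\<dots> = {v\<in>{0..<x+2}. \<not> v < p}" using out by simp
  also have "\<dots> = {p..<x+2}" by auto
  finally have T: "terminal_vertices (x+2) ?E = {p..<x+2}" .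
  show xy: "xy_tdg x y (x+2) ?E"
    unfolding xy_tdg_def tdg_def using sub ac I T y unfolding p_def by simp
  have "card (ext {0..<x+2} ?E) * ((card {0::nat} + 1) * (card {1..<p} + 1)) = fact (card {0..<x+2})"
    by (rule fam2) (use p in auto)
  moreover have cB: "card {0::nat} + 1 = 2" "card {1..<p} + 1 = p" using p by auto
  ultimately have "card (ext {0..<x+2} ?E) * (2 * p) = fact (x+2)"
    by (simp only: cB card_atLeastLessThan diff_zero)
  then have "num_orderings (x+2) ?E * (2 * (x - y + 2)) = fact (x + 2)"
    unfolding num_ext p_def .
  then show "real (num_orderings (x+2) ?E) = real (fact (x + 2)) / (2 * real (x - y + 2))"
    by (intro real_div_eq2) auto
  show "real (num_orderings (x+2) E) \<le> real (fact (x + 2)) / (2 * real (x - y + 2))"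
    if "xy_tdg x y (x+2) E" for E
    using p3_bound[OF that] y by (intro real_div_le2) auto
qed

lemma p3b_max:
  assumes y: "y = 1" "1 \<le> x"
  shows "max_orderings_is x y (x+2) (real (fact (x + 2)) / (2 * real (x - y + 3)))"
proof (rule max_intro)
  let ?E = "{(0,x),(x,x+1)} \<union> {1..<x} \<times> {x+1}"
  have sub: "?E \<subseteq> {0..<x+2} \<times> {0..<x+2}" using y by auto
  have ac: "acyclic ?E" by (rule acyclic_incr) (use y in auto)
  have e: "(0, x) \<in> ?E" "(x, x+1) \<in> ?E" by auto
  have I: "initial_vertices (x+2) ?E = {0..<x}"
  proof -
    have "initial_vertices (x+2) ?E \<subseteq> {0..<x}"
      unfolding initial_vertices_def using e by (auto simp: less_Suc_eq)
    moreover have "{0..<x} \<subseteq> initial_vertices (x+2) ?E"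
      unfolding initial_vertices_def by auto
    ultimately show ?thesis by blast
  qed
  have out: "(\<exists>w. (v,w) \<in> ?E) \<longleftrightarrow> v \<le> x" for v
  proof
    assume "\<exists>w. (v,w) \<in> ?E" then show "v \<le> x" by auto
  next
    assume vp: "v \<le> x"
    show "\<exists>w. (v,w) \<in> ?E"
    proof (cases "v = 0 \<or> v = x")
      case True then show ?thesis by auto
    next
      case False then have "(v,x+1) \<in> ?E" using vp by auto
      then show ?thesis by blast
    qed
  qed
  have "terminal_vertices (x+2) ?E = {v\<in>{0..<x+2}. \<not> (\<exists>w. (v,w) \<in> ?E)}"
    unfolding terminal_vertices_def by blast
  also have "\<dots> = {v\<in>{0..<x+2}. \<not> v \<le> x}" using out by simp
  also have "\<dots> = {x+1}" by auto
  finally have T: "terminal_vertices (x+2) ?E = {x+1}" .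
  show xy: "xy_tdg x y (x+2) ?E"
    unfolding xy_tdg_def tdg_def using sub ac I T y by simp
  have "card (ext {0..<x+2} ({(0,x),(x,x+1)} \<union> {1..<x} \<times> {x+1})) * (2 * (card {1..<x} + 3)) = fact (card {0..<x+2})"
    by (rule fam3) (use y in auto)
  then have "num_orderings (x+2) ?E * (2 * (x - y + 3)) = fact (x + 2)"
    using y unfolding num_ext by simp
  then show "real (num_orderings (x+2) ?E) = real (fact (x + 2)) / (2 * real (x - y + 3))"
    by (intro real_div_eq2) auto
  show "real (num_orderings (x+2) E) \<le> real (fact (x + 2)) / (2 * real (x - y + 3))"
    if "xy_tdg x y (x+2) E" for E
    using p3_bound[OF that] y by (intro real_div_le2) auto
qed

lemma p4_bound:
  assumes xy: "xy_tdg 1 1 n E" and n: "2 \<le> n"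
  shows "num_orderings n E \<le> fact (n - 2)"
proof -
  let ?V = "{0..<n}"
  have t: "tdg n E" and ci: "card (initial_vertices n E) = 1"
    and ct: "card (terminal_vertices n E) = 1" using xy unfolding xy_tdg_def by auto
  obtain s where s: "initial_vertices n E = {s}" using ci card_1_singletonE by blast
  obtain t0 where t0: "terminal_vertices n E = {t0}" using ct card_1_singletonE by blast
  have EV: "E \<subseteq> ?V \<times> ?V" and ac: "acyclic E" using t unfolding tdg_def by auto
  have fE: "finite E" using EV finite_subset by blast
  have sV: "s \<in> ?V" using s init_sub by blast
  have tV: "t0 \<in> ?V" using t0 term_sub by blast
  have wf1: "wf E" by (rule finite_acyclic_wf[OF fE ac])
  have wf2: "wf (E\<inverse>)" by (rule finite_acyclic_wf_converse[OF fE ac])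
  have reach_s: "v \<in> ?V \<longrightarrow> (s,v) \<in> E\<^sup>*" for v
    using wf1
  proof (induction v rule: wf_induct_rule)
    case (less v)
    show ?case
    proof
      assume vV: "v \<in> ?V"
      show "(s,v) \<in> E\<^sup>*"
      proof (cases "v \<in> initial_vertices n E")
        case True then show ?thesis using s by auto
      next
        case False
        then obtain u where u: "(u,v) \<in> E" using vV unfolding initial_vertices_def by auto
        then have "u \<in> ?V" using EV by auto
        then have "(s,u) \<in> E\<^sup>*" using less u by auto
        then show ?thesis using u by (rule rtrancl_into_rtrancl)
      qed
    qed
  qed
  have reach_t: "v \<in> ?V \<longrightarrow> (v,t0) \<in> E\<^sup>*" for v
    using wf2
  proof (induction v rule: wf_induct_rule)
    case (less v)
    show ?case
    proof
      assume vV: "v \<in> ?V"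
      show "(v,t0) \<in> E\<^sup>*"
      proof (cases "v \<in> terminal_vertices n E")
        case True then show ?thesis using t0 by auto
      next
        case False
        then obtain u where u: "(v,u) \<in> E" using vV unfolding terminal_vertices_def by auto
        then have "u \<in> ?V" using EV by auto
        then have "(u,t0) \<in> E\<^sup>*" using less u by auto
        then show ?thesis using u by (meson converse_rtrancl_into_rtrancl)
      qed
    qed
  qed
  have st: "s \<noteq> t0"
  proof
    assume eq: "s = t0"
    define v where "v = (if s = 0 then 1 else (0::nat))"
    have v: "v \<in> ?V" "v \<noteq> s" using n unfolding v_def by auto
    have "(s,v) \<in> E\<^sup>+" using reach_s v by (auto simp: rtrancl_eq_or_trancl)
    moreover have "(v,s) \<in> E\<^sup>+" using reach_t v eq by (auto simp: rtrancl_eq_or_trancl)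
    ultimately have "(s,s) \<in> E\<^sup>+" by (rule trancl_trans)
    then show False using ac unfolding acyclic_def by auto
  qed
  let ?R = "{s} \<times> (?V - {s}) \<union> (?V - {t0}) \<times> {t0}"
  have RE: "?R \<subseteq> E\<^sup>+"
  proof
    fix p assume "p \<in> ?R"
    then consider v where "v \<in> ?V" "v \<noteq> s" "p = (s,v)" | v where "v \<in> ?V" "v \<noteq> t0" "p = (v,t0)"
      by blast
    then show "p \<in> E\<^sup>+"
    proof cases
      case 1 then show ?thesis using reach_s[of v] by (auto simp: rtrancl_eq_or_trancl)
    next
      case 2 then show ?thesis using reach_t[of v] by (auto simp: rtrancl_eq_or_trancl)
    qed
  qed
  have "card (ext ?V ?R) = fact (card ?V - 2)"
    by (rule fam4[OF _ sV tV st]) (use sV tV in auto)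
  then show ?thesis using upper_sub[OF t RE] by simp
qed

lemma p4_max:
  assumes n: "2 \<le> n"
  shows "max_orderings_is 1 1 n (real (fact (n - 2)))"
proof (rule max_intro)
  let ?V = "{0..<n}"
  let ?E = "{0} \<times> {1..<n} \<union> {0..<n-1} \<times> {n-1}"
  have sub: "?E \<subseteq> ?V \<times> ?V" using n by auto
  have ac: "acyclic ?E" by (rule acyclic_incr) (use n in auto)
  have I: "initial_vertices n ?E = {0}"
  proof -
    have "v \<notin> initial_vertices n ?E" if "v \<noteq> 0" for v
    proof -
      have "v \<notin> ?V \<or> (0,v) \<in> ?E" using that by auto
      then show ?thesis unfolding initial_vertices_def by auto
    qed
    moreover have "0 \<in> initial_vertices n ?E" unfolding initial_vertices_def using n by auto
    ultimately show ?thesis by blast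
  qed
  have T: "terminal_vertices n ?E = {n-1}"
  proof -
    have "v \<notin> terminal_vertices n ?E" if "v \<noteq> n - 1" for v
    proof -
      have "v \<notin> ?V \<or> (v,n-1) \<in> ?E" using that by auto
      then show ?thesis unfolding terminal_vertices_def by auto
    qed
    moreover have "n - 1 \<in> terminal_vertices n ?E" unfolding terminal_vertices_def using n by auto
    ultimately show ?thesis by blast
  qed
  show "xy_tdg 1 1 n ?E" unfolding xy_tdg_def tdg_def using sub ac I T by simp
  have d1: "?V - {0} = {1..<n}" by auto
  have d2: "?V - {n-1} = {0..<n-1}" using n by auto
  have RR: "?E \<inter> ?V \<times> ?V = {0} \<times> (?V - {0}) \<union> (?V - {n-1}) \<times> {n-1}"
    unfolding d1 d2 using sub by blast
  have "card (ext ?V ?E) = fact (card ?V - 2)"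
    by (rule fam4[OF _ _ _ _ RR]) (use n in auto)
  then show "real (num_orderings n ?E) = real (fact (n - 2))" unfolding num_ext by simp
  show "real (num_orderings n E) \<le> real (fact (n - 2))" if "xy_tdg 1 1 n E" for E
    using p4_bound[OF that n] by (simp only: of_nat_le_iff)
qed

theorem mainTheorem20:
  shows "(\<forall>x y n. 1 \<le> y \<and> y \<le> x \<longrightarrow>
            (n = x \<longrightarrow> (\<forall>E. xy_tdg x y n E \<longrightarrow> x = y) \<and>
                        (x = y \<longrightarrow> max_orderings_is x y n (real (fact n)))) \<and>
            (n = x + 1 \<longrightarrow>
               max_orderings_is x y n (real (fact (x + 1)) / real (x - y + 2))) \<and>
            (n = x + 2 \<and> y > 1 \<longrightarrow>
               max_orderings_is x y n (real (fact (x + 2)) / (2 * real (x - y + 2)))) \<and>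
            (n = x + 2 \<and> y = 1 \<longrightarrow>
               max_orderings_is x y n (real (fact (x + 2)) / (2 * real (x - y + 3))))) \<and>
         (\<forall>n. 2 \<le> n \<longrightarrow> max_orderings_is 1 1 n (real (fact (n - 2))))"
proof (intro conjI allI impI)
  fix x y n :: nat
  assume y: "1 \<le> y \<and> y \<le> x"
  show "n = x \<Longrightarrow> xy_tdg x y n E \<Longrightarrow> x = y" for E using p1_eq by blast
  show "n = x \<Longrightarrow> x = y \<Longrightarrow> max_orderings_is x y n (real (fact n))" using p1_max by blast
  show "n = x + 1 \<Longrightarrow> max_orderings_is x y n (real (fact (x + 1)) / real (x - y + 2))"
    using p2_max y by blast
  show "n = x + 2 \<and> y > 1 \<Longrightarrow> max_orderings_is x y n (real (fact (x + 2)) / (2 * real (x - y + 2)))"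
    using p3a_max y by blast
  show "n = x + 2 \<and> y = 1 \<Longrightarrow> max_orderings_is x y n (real (fact (x + 2)) / (2 * real (x - y + 3)))"
    using p3b_max y by blast
next
  fix n :: nat
  show "2 \<le> n \<Longrightarrow> max_orderings_is 1 1 n (real (fact (n - 2)))" by (rule p4_max)
qed

end
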